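(* Let $\Omega\subset\mathbb H^n$ be an open, horizontally bounded and $H$-convex set. If $u:\overline\Omega\to\mathbb R$ is an $H$-convex function with $u=0$ on $\partial\Omega$, then $u\le0$. Moreover, if $\Omega$ is (Euclidean) convex, then either $u\equiv0$ on $\overline\Omega$, or $u<0$ in $\Omega$.
   Context: $\mathbb H^n=\mathbb C^n\times\mathbb R\cong\mathbb R^{2n+1}$ with real coordinates $(x,y,t)$, $z=x+iy$, group law $(z,t)\circ(z',t')=(z+z',t+t'+2\,\mathrm{Im}\langle z,z'\rangle)$, $\langle z,z'\rangle=\sum_j z_j\overline{z'_j}$. Dilations $\delta_\lambda(z,t)=(\lambda z,\lambda^2t)$. Horizontal plane at $\xi_0=(x_0,y_0,t_0)$: $H_{\xi_0}=\{(x,y,t):t=t_0+2(x\cdot y_0-x_0\cdot y)\}$. Gauge $N(z,t)=(|z|^4+t^2)^{1/4}$, $d_H(\xi,\zeta)=N(\zeta^{-1}\circ\xi)$, $\mathrm{diam}_H$ the $d_H$-diameter. A set $\tilde\Omega$ is $H$-convex if for all $\xi_1,\xi_2\in\tilde\Omega$ with $\xi_1\in H_{\xi_2}$ and $\lambda\in[0,1]$, $\xi_1\circ\delta_\lambda(\xi_1^{-1}\circ\xi_2)\in\tilde\Omega$; a function $u$ on $\tilde\Omega$ is $H$-convex if $u(\xi_1\circ\delta_\lambda(\xi_1^{-1}\circ\xi_2))\le(1-\lambda)u(\xi_1)+\lambda u(\xi_2)$ for all such $\xi_1,\xi_2,\lambda$. $\Omega$ is horizontally bounded if $\sup\{\mathrm{diam}_H(\Omega\cap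 H_\xi):\xi\in\Omega\}<\infty$. *)

theory Defs
  imports "HOL-Analysis.Analysis"
begin

text \<open>Points of the Heisenberg group H^n = C^n x R, in real coordinates (x, y, t),
  z = x + i y, with x, y in R^n (index type 'n) and t in R.\<close>

type_synonym 'n heis = "(real^'n) \<times> (real^'n) \<times> real"

text \<open>Group law: Im <z,z'> = y . x' - x . y'.\<close>
definition hmult :: "'n::finite heis \<Rightarrow> 'n heis \<Rightarrow> 'n heis" where
  "hmult p q = (case p of (x, y, t) \<Rightarrow> case q of (x', y', t') \<Rightarrow>
      (x + x', y + y', t + t' + 2 * (y \<bullet> x' - x \<bullet> y')))"

definition hinv :: "'n::finite heis \<Rightarrow> 'n heis" where
  "hinv p = (case p of (x, y, t) \<Rightarrow> (- x, - y, - t))"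

definition hdil :: "real \<Rightarrow> 'n::finite heis \<Rightarrow> 'n heis" where
  "hdil l p = (case p of (x, y, t) \<Rightarrow> (l *\<^sub>R x, l *\<^sub>R y, l\<^sup>2 * t))"

definition hplane :: "'n::finite heis \<Rightarrow> 'n heis set" where
  "hplane p0 = (case p0 of (x0, y0, t0) \<Rightarrow>
      {(x, y, t). t = t0 + 2 * (x \<bullet> y0 - x0 \<bullet> y)})"

definition gauge :: "'n::finite heis \<Rightarrow> real" where
  "gauge p = (case p of (x, y, t) \<Rightarrow> root 4 ((norm x ^ 2 + norm y ^ 2) ^ 2 + t\<^sup>2))"

definition dH :: "'n::finite heis \<Rightarrow> 'n heis \<Rightarrow> real" where
  "dH p q = gauge (hmult (hinv q) p)"

definition H_convex_set :: "'n::finite heis set \<Rightarrow> bool" where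
  "H_convex_set S \<longleftrightarrow> (\<forall>p1\<in>S. \<forall>p2\<in>S. p1 \<in> hplane p2 \<longrightarrow>
      (\<forall>l\<in>{0..1}. hmult p1 (hdil l (hmult (hinv p1) p2)) \<in> S))"

definition H_convex_fun :: "'n::finite heis set \<Rightarrow> ('n heis \<Rightarrow> real) \<Rightarrow> bool" where
  "H_convex_fun S u \<longleftrightarrow> (\<forall>p1\<in>S. \<forall>p2\<in>S. p1 \<in> hplane p2 \<longrightarrow>
      (\<forall>l\<in>{0..1}. hmult p1 (hdil l (hmult (hinv p1) p2)) \<in> S \<longrightarrow>
         u (hmult p1 (hdil l (hmult (hinv p1) p2))) \<le> (1 - l) * u p1 + l * u p2))"

definition horiz_bounded :: "'n::finite heis set \<Rightarrow> bool" where
  "horiz_bounded S \<longleftrightarrow> (\<exists>C. \<forall>p\<in>S. \<forall>a\<in>S \<inter> hplane p. \<forall>b\<in>S \<inter> hplane p. dH a b \<le> C)"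

end

theory Submission
  imports Defs
begin

definition hline :: "'n::finite heis \<Rightarrow> real^'n \<Rightarrow> real^'n \<Rightarrow> real \<Rightarrow> 'n heis" where
  "hline p a b s = (fst p + s *\<^sub>R a, fst (snd p) + s *\<^sub>R b,
      snd (snd p) + 2 * s * (fst (snd p) \<bullet> a - fst p \<bullet> b))"

lemma mem_hplane: "(x, y, t) \<in> hplane (x0, y0, t0) \<longleftrightarrow> t = t0 + 2 * (x \<bullet> y0 - x0 \<bullet> y)"
  by (simp add: hplane_def)

lemma hplane_sym: "r \<in> hplane p \<Longrightarrow> p \<in> hplane r"
  by (cases p; cases r) (auto simp: hplane_def inner_commute)

lemma hline_0: "hline p a b 0 = p"
  by (cases p) (simp add: hline_def)

lemma hline_neg: "hline p (-a) (-b) s = hline p a b (-s)"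
  by (cases p) (simp add: hline_def algebra_simps)

lemma hline_hplane: "hline p a b s1 \<in> hplane (hline p a b s2)"
  by (cases p) (simp add: hline_def hplane_def inner_add_left inner_add_right algebra_simps inner_commute)

lemma hline_seg: "hmult (hline p a b s1) (hdil l (hmult (hinv (hline p a b s1)) (hline p a b s2)))
   = hline p a b (s1 + l * (s2 - s1))"
  by (cases p) (simp add: hline_def hmult_def hinv_def hdil_def inner_add_left inner_add_right
      algebra_simps inner_commute power2_eq_square)

lemma hline_rel0: "hmult (hinv p) (hline p a b s) = (s *\<^sub>R a, s *\<^sub>R b, 0)"
  by (cases p) (simp add: hline_def hmult_def hinv_def inner_add_left inner_add_right
      algebra_simps inner_commute)

lemma hline_dH: "dH (hline p a b s) p = root 4 ((s\<^sup>2 * (norm a ^ 2 + norm b ^ 2))\<^sup>2)"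
proof -
  have "dH (hline p a b s) p = root 4 ((norm (s *\<^sub>R a) ^ 2 + norm (s *\<^sub>R b) ^ 2) ^ 2 + 0\<^sup>2)"
    by (simp add: dH_def hline_rel0 gauge_def)
  also have "norm (s *\<^sub>R a) ^ 2 = s\<^sup>2 * norm a ^ 2" by (simp add: power_mult_distrib)
  also have "norm (s *\<^sub>R b) ^ 2 = s\<^sup>2 * norm b ^ 2" by (simp add: power_mult_distrib)
  finally show ?thesis by (simp add: algebra_simps)
qed

lemma hline_1: "r \<in> hplane p \<Longrightarrow> r = hline p (fst r - fst p) (fst (snd r) - fst (snd p)) 1"
  by (cases p; cases r) (simp add: hline_def hplane_def inner_diff_left inner_diff_right algebra_simps inner_commute)

lemma hline_cont: "continuous_on UNIV (hline p a b)"
  unfolding hline_def by (intro continuous_intros)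

lemma hline_far:
  assumes "(a, b) \<noteq> (0, 0)"
  shows "\<exists>s>0. dH (hline p a b s) p > C"
proof -
  define K where "K = norm a ^ 2 + norm b ^ 2"
  have K: "K > 0" using assms unfolding K_def
    by (metis add_nonneg_pos add_pos_nonneg norm_eq_zero order_neq_le_trans zero_le_power2
        zero_less_power2 norm_ge_zero)
  define C' where "C' = max C 0 + 1"
  have C': "C' > 0" "C' \<ge> C" unfolding C'_def by auto
  define s where "s = sqrt ((C'^2 + 1) / K)"
  have s: "s > 0" unfolding s_def using K by (intro real_sqrt_gt_zero divide_pos_pos) (auto intro: add_nonneg_pos)
  have s2: "s\<^sup>2 * K = C'^2 + 1" unfolding s_def using K
    by (simp add: add_nonneg_nonneg)
  have "dH (hline p a b s) p = root 4 ((C'^2 + 1)\<^sup>2)"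
    using s2 by (simp add: hline_dH K_def)
  moreover have "root 4 (C' ^ 4) < root 4 ((C'^2 + 1)\<^sup>2)"
    by (rule real_root_less_mono) (auto simp: power2_eq_square power4_eq_xxxx algebra_simps
        intro!: add_pos_nonneg)
  moreover have "root 4 (C' ^ 4) = C'" using C' by (simp add: real_root_pos_unique)
  ultimately show ?thesis using s C' by auto
qed

lemma frontier_pt:
  fixes \<Omega> :: "'n::finite heis set"
  assumes "open \<Omega>" "horiz_bounded \<Omega>" "p \<in> \<Omega>" "(a, b) \<noteq> (0, 0)"
  shows "\<exists>s>0. hline p a b s \<in> frontier \<Omega>"
proof -
  obtain C where C: "\<forall>q\<in>\<Omega>. \<forall>x\<in>\<Omega> \<inter> hplane q. \<forall>y\<in>\<Omega> \<inter> hplane q. dH x y \<le> C"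
    using assms(2) unfolding horiz_bounded_def by blast
  obtain s0 where s0: "s0 > 0" "dH (hline p a b s0) p > C"
    using hline_far[OF assms(4)] by blast
  have pp: "p \<in> hplane p" using hline_hplane[of p a b 0 0] by (simp add: hline_0)
  have lp: "hline p a b s0 \<in> hplane p" using hline_hplane[of p a b s0 0] by (simp add: hline_0)
  have nin: "hline p a b s0 \<notin> \<Omega>"
  proof
    assume h: "hline p a b s0 \<in> \<Omega>"
    have "dH (hline p a b s0) p \<le> C" using C assms(3) pp lp h by blast
    then show False using s0(2) by simp
  qed
  let ?S = "hline p a b ` {0..s0}"
  have "connected ?S"
    by (rule connected_continuous_image) (auto intro: continuous_on_subset[OF hline_cont])
  moreover have "?S \<inter> \<Omega> \<noteq> {}" using assms(3) s0 hline_0[of p a b]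
    by (metis IntI atLeastAtMost_iff empty_iff image_eqI order_refl less_imp_le)
  moreover have "?S - \<Omega> \<noteq> {}" using nin s0
    by (metis DiffI atLeastAtMost_iff empty_iff image_eqI order_refl less_imp_le)
  ultimately have "?S \<inter> frontier \<Omega> \<noteq> {}" by (rule connected_Int_frontier)
  then obtain s where s: "s \<in> {0..s0}" "hline p a b s \<in> frontier \<Omega>" by blast
  have "s \<noteq> 0"
  proof
    assume "s = 0"
    then have "p \<in> frontier \<Omega>" using s hline_0 by metis
    then show False using assms(1,3) by (simp add: frontier_def interior_open)
  qed
  then show ?thesis using s by (intro exI[of _ s]) auto
qed

lemma seg_ineq:
  assumes "H_convex_fun S u" "hline p a b s1 \<in> S" "hline p a b s2 \<in> S" "l \<in> {0..1}"
    "hline p a b (s1 + l * (s2 - s1)) \<in> S"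
  shows "u (hline p a b (s1 + l * (s2 - s1))) \<le> (1 - l) * u (hline p a b s1) + l * u (hline p a b s2)"
  using assms hline_hplane[of p a b s1 s2] hline_seg[of p a b s1 l s2]
  unfolding H_convex_fun_def by metis

lemma part1:
  fixes \<Omega> :: "'n::finite heis set"
  assumes "open \<Omega>" "horiz_bounded \<Omega>" "H_convex_fun (closure \<Omega>) u"
    "\<forall>p\<in>frontier \<Omega>. u p = 0" "p \<in> closure \<Omega>"
  shows "u p \<le> 0"
proof (cases "p \<in> frontier \<Omega>")
  case True then show ?thesis using assms(4) by simp
next
  case False
  then have p: "p \<in> \<Omega>" using assms(5) closure_Un_frontier by blast
  define a :: "real^'n" where "a = axis undefined 1"
  have ab: "(a, 0) \<noteq> (0, 0)" unfolding a_def by (simp add: axis_eq_0_iff)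
  have ab': "(-a, -0) \<noteq> (0, 0)" unfolding a_def by (simp add: axis_eq_0_iff)
  obtain s1 where s1: "s1 > 0" "hline p a 0 s1 \<in> frontier \<Omega>"
    using frontier_pt[OF assms(1,2) p ab] by blast
  obtain s2 where s2: "s2 > 0" "hline p (-a) (-0) s2 \<in> frontier \<Omega>"
    using frontier_pt[OF assms(1,2) p ab'] by blast
  have s2': "hline p a 0 (-s2) \<in> frontier \<Omega>" using s2 hline_neg by metis
  define l where "l = s2 / (s1 + s2)"
  have l: "l \<in> {0..1}" unfolding l_def using s1 s2 by auto
  have pt: "-s2 + l * (s1 - - s2) = 0" unfolding l_def using s1 s2 by (simp add: field_simps)
  have fc: "frontier \<Omega> \<subseteq> closure \<Omega>" by (simp add: frontier_def)
  have "u (hline p a 0 (-s2 + l * (s1 - - s2))) \<le>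
      (1 - l) * u (hline p a 0 (-s2)) + l * u (hline p a 0 s1)"
    by (rule seg_ineq[OF assms(3)]) (use s1 s2' fc l pt hline_0[of p a 0] assms(5) in auto)
  then show ?thesis using pt hline_0[of p a 0] s1 s2' assms(4) by simp
qed

lemma step0:
  fixes \<Omega> :: "'n::finite heis set"
  assumes "open \<Omega>" "horiz_bounded \<Omega>" "H_convex_fun (closure \<Omega>) u"
    "\<forall>p\<in>frontier \<Omega>. u p = 0" "p \<in> \<Omega>" "r \<in> \<Omega>" "r \<in> hplane p" "u p = 0"
  shows "u r = 0"
proof -
  define a where "a = fst r - fst p"
  define b where "b = fst (snd r) - fst (snd p)"
  have r: "r = hline p a b 1" unfolding a_def b_def by (rule hline_1[OF assms(7)])
  have cl: "\<Omega> \<subseteq> closure \<Omega>" by (rule closure_subset)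
  show ?thesis
  proof (cases "(a, b) = (0, 0)")
    case True
    then have "r = p" using r by (cases p) (simp add: hline_def)
    then show ?thesis using assms(8) by simp
  next
    case False
    then have ab': "(-a, -b) \<noteq> (0, 0)" by simp
    obtain s where s: "s > 0" "hline p (-a) (-b) s \<in> frontier \<Omega>"
      using frontier_pt[OF assms(1,2,5) ab'] by blast
    have s': "hline p a b (-s) \<in> frontier \<Omega>" using s hline_neg by metis
    define l where "l = s / (1 + s)"
    have l: "l \<in> {0..1}" "l > 0" unfolding l_def using s by auto
    have pt: "-s + l * (1 - - s) = 0" unfolding l_def using s by (simp add: field_simps)
    have fc: "frontier \<Omega> \<subseteq> closure \<Omega>" by (simp add: frontier_def)
    have "u (hline p a b (-s + l * (1 - - s))) \<le>
        (1 - l) * u (hline p a b (-s)) + l * u (hline p a b 1)"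
      by (rule seg_ineq[OF assms(3)]) (use s' fc l pt hline_0[of p a b] assms(5,6) r cl in auto)
    then have "0 \<le> l * u r" using pt hline_0[of p a b] s' assms(4,8) r by simp
    then have "u r \<ge> 0" using l by (simp add: zero_le_mult_iff)
    moreover have "u r \<le> 0" using part1[OF assms(1-4)] assms(6) cl by blast
    ultimately show ?thesis by simp
  qed
qed

lemma sqrt_abs_mult: "sqrt \<bar>d\<bar> * sqrt d = d"
proof (cases "d \<ge> 0")
  case True then show ?thesis by simp
next
  case False
  then have "\<bar>d\<bar> = - d" by simp
  then show ?thesis using False by (simp add: real_sqrt_minus)
qed

lemma local_chain:
  fixes \<Omega> :: "'n::finite heis set"
  assumes "open \<Omega>" "q \<in> \<Omega>"
  shows "\<exists>N. open N \<and> q \<in> N \<and> (\<forall>q'\<in>N. q' \<in> \<Omega> \<and> (\<exists>r1 r2 r3 r4.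
     r1 \<in> \<Omega> \<and> r2 \<in> \<Omega> \<and> r3 \<in> \<Omega> \<and> r4 \<in> \<Omega> \<and> r1 \<in> hplane q \<and> r2 \<in> hplane r1 \<and>
     r3 \<in> hplane r2 \<and> r4 \<in> hplane r3 \<and> q' \<in> hplane r4))"
proof -
  obtain x y t where q: "q = (x, y, t)" by (cases q)
  define e :: "real^'n" where "e = axis undefined 1"
  have ee: "e \<bullet> e = 1" by (simp add: e_def inner_axis_axis)
  define \<tau> where "\<tau> = (\<lambda>q'::'n heis. t + 2 * (fst q' \<bullet> y - x \<bullet> fst (snd q')))"
  define \<delta> where "\<delta> = (\<lambda>q'. snd (snd q') - \<tau> q')"
  define \<alpha> where "\<alpha> = (\<lambda>q'. sqrt \<bar>\<delta> q'\<bar> / 2)"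
  define \<beta> where "\<beta> = (\<lambda>q'. - sqrt (\<delta> q') / 2)"
  define R1 where "R1 = (\<lambda>q'. (fst q', fst (snd q'), \<tau> q'))"
  define R2 where "R2 = (\<lambda>q'. (fst q' + \<alpha> q' *\<^sub>R e, fst (snd q'), \<tau> q' + 2 * \<alpha> q' * (e \<bullet> fst (snd q'))))"
  define R3 where "R3 = (\<lambda>q'. (fst q' + \<alpha> q' *\<^sub>R e, fst (snd q') + \<beta> q' *\<^sub>R e,
      \<tau> q' + 2 * \<alpha> q' * (e \<bullet> fst (snd q')) - 2 * \<beta> q' * ((fst q' + \<alpha> q' *\<^sub>R e) \<bullet> e)))"
  define R4 where "R4 = (\<lambda>q'. (fst q', fst (snd q') + \<beta> q' *\<^sub>R e,
      \<tau> q' - 2 * \<beta> q' * (fst q' \<bullet> e) - 4 * \<alpha> q' * \<beta> q'))"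
  define N where "N = \<Omega> \<inter> R1 -` \<Omega> \<inter> R2 -` \<Omega> \<inter> R3 -` \<Omega> \<inter> R4 -` \<Omega>"
  have c\<tau>: "continuous_on UNIV \<tau>" unfolding \<tau>_def by (intro continuous_intros)
  have c\<delta>: "continuous_on UNIV \<delta>" unfolding \<delta>_def by (intro continuous_intros c\<tau>)
  have c\<alpha>: "continuous_on UNIV \<alpha>" unfolding \<alpha>_def by (intro continuous_intros c\<delta>) auto
  have c\<beta>: "continuous_on UNIV \<beta>" unfolding \<beta>_def by (intro continuous_intros c\<delta>) auto
  have c1: "continuous_on UNIV R1" unfolding R1_def by (intro continuous_intros c\<tau>)
  have c2: "continuous_on UNIV R2" unfolding R2_def by (intro continuous_intros c\<tau> c\<alpha>)
  have c3: "continuous_on UNIV R3" unfolding R3_def by (intro continuous_intros c\<tau> c\<alpha> c\<beta>)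
  have c4: "continuous_on UNIV R4" unfolding R4_def by (intro continuous_intros c\<tau> c\<alpha> c\<beta>)
  have ov: "open (R -` \<Omega>)" if "continuous_on UNIV R" for R :: "'n heis \<Rightarrow> 'n heis"
    using continuous_on_open_vimage[of UNIV R] that assms(1) by auto
  have "open N" unfolding N_def using ov[OF c1] ov[OF c2] ov[OF c3] ov[OF c4] assms(1)
    by (intro open_Int) auto
  moreover have "q \<in> N"
  proof -
    have "\<delta> q = 0" "\<tau> q = t" by (simp_all add: \<delta>_def \<tau>_def q inner_commute)
    then have "R1 q = q" "R2 q = q" "R3 q = q" "R4 q = q"
      by (simp_all add: R1_def R2_def R3_def R4_def \<alpha>_def \<beta>_def q)
    then show ?thesis unfolding N_def using assms(2) by auto
  qed
  moreover have "\<forall>q'\<in>N. q' \<in> \<Omega> \<and> (\<exists>r1 r2 r3 r4.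
     r1 \<in> \<Omega> \<and> r2 \<in> \<Omega> \<and> r3 \<in> \<Omega> \<and> r4 \<in> \<Omega> \<and> r1 \<in> hplane q \<and> r2 \<in> hplane r1 \<and>
     r3 \<in> hplane r2 \<and> r4 \<in> hplane r3 \<and> q' \<in> hplane r4)"
  proof
    fix q' assume qN: "q' \<in> N"
    obtain x' y' t' where q': "q' = (x', y', t')" by (cases q')
    have ab: "4 * \<alpha> q' * \<beta> q' = - \<delta> q'"
      using sqrt_abs_mult[of "\<delta> q'"] by (simp add: \<alpha>_def \<beta>_def)
    have h1: "R1 q' \<in> hplane q" by (simp add: R1_def q q' \<tau>_def mem_hplane)
    have h2: "R2 q' \<in> hplane (R1 q')"
      by (simp add: R1_def R2_def q' mem_hplane inner_add_left inner_add_right algebra_simps inner_commute)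
    have h3: "R3 q' \<in> hplane (R2 q')"
      by (simp add: R3_def R2_def q' mem_hplane inner_add_left inner_add_right algebra_simps inner_commute)
    have h4: "R4 q' \<in> hplane (R3 q')"
      by (simp add: R3_def R4_def q' mem_hplane inner_add_left inner_add_right algebra_simps inner_commute ee)
    have h5: "q' \<in> hplane (R4 q')"
      using ab by (simp add: R4_def q' mem_hplane inner_add_left inner_add_right algebra_simps inner_commute \<delta>_def)
    show "q' \<in> \<Omega> \<and> (\<exists>r1 r2 r3 r4.
     r1 \<in> \<Omega> \<and> r2 \<in> \<Omega> \<and> r3 \<in> \<Omega> \<and> r4 \<in> \<Omega> \<and> r1 \<in> hplane q \<and> r2 \<in> hplane r1 \<and>
     r3 \<in> hplane r2 \<and> r4 \<in> hplane r3 \<and> q' \<in> hplane r4)"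
      using qN h1 h2 h3 h4 h5 unfolding N_def by blast
  qed
  ultimately show ?thesis by blast
qed


theorem proposition2p4:
  fixes \<Omega> :: "'n::finite heis set" and u :: "'n heis \<Rightarrow> real"
  assumes "open \<Omega>" and "horiz_bounded \<Omega>" and "H_convex_set \<Omega>"
    and "H_convex_fun (closure \<Omega>) u"
    and "\<forall>p\<in>frontier \<Omega>. u p = 0"
  shows "(\<forall>p\<in>closure \<Omega>. u p \<le> 0) \<and>
         (convex \<Omega> \<longrightarrow> (\<forall>p\<in>closure \<Omega>. u p = 0) \<or> (\<forall>p\<in>\<Omega>. u p < 0))"
proof -
  have P1: "\<forall>p\<in>closure \<Omega>. u p \<le> 0"
    using part1[OF assms(1,2,4,5)] by blast
  have zi: "u p = 0 \<longleftrightarrow> u r = 0" if "p \<in> \<Omega>" "r \<in> \<Omega>" "r \<in> hplane p" for p r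
    using step0[OF assms(1,2,4,5)] that hplane_sym by metis
  have loc: "\<exists>N. open N \<and> q \<in> N \<and> (\<forall>q'\<in>N. q' \<in> \<Omega> \<and> (u q = 0 \<longleftrightarrow> u q' = 0))"
    if qO: "q \<in> \<Omega>" for q
  proof -
    obtain N where N: "open N" "q \<in> N" "\<forall>q'\<in>N. q' \<in> \<Omega> \<and> (\<exists>r1 r2 r3 r4.
     r1 \<in> \<Omega> \<and> r2 \<in> \<Omega> \<and> r3 \<in> \<Omega> \<and> r4 \<in> \<Omega> \<and> r1 \<in> hplane q \<and> r2 \<in> hplane r1 \<and>
     r3 \<in> hplane r2 \<and> r4 \<in> hplane r3 \<and> q' \<in> hplane r4)"
      using local_chain[OF assms(1) qO] by blast
    have "u q = 0 \<longleftrightarrow> u q' = 0" if "q' \<in> N" for q'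
    proof -
      obtain r1 r2 r3 r4 where r: "q' \<in> \<Omega>"
        "r1 \<in> \<Omega>" "r2 \<in> \<Omega>" "r3 \<in> \<Omega>" "r4 \<in> \<Omega>" "r1 \<in> hplane q" "r2 \<in> hplane r1"
        "r3 \<in> hplane r2" "r4 \<in> hplane r3" "q' \<in> hplane r4"
        using N(3) \<open>q' \<in> N\<close> by blast
      show ?thesis using zi[OF \<open>q \<in> \<Omega>\<close> r(2,6)] zi[OF r(2,3,7)] zi[OF r(3,4,8)]
        zi[OF r(4,5,9)] zi[OF r(5,1,10)] by blast
    qed
    then show ?thesis using N by blast
  qed
  define Z where "Z = {q\<in>\<Omega>. u q = 0}"
  define W where "W = {q\<in>\<Omega>. u q \<noteq> 0}"
  have oZ: "open Z" unfolding open_subopen[of Z]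
  proof
    fix q assume "q \<in> Z"
    then obtain N where "open N" "q \<in> N" "\<forall>q'\<in>N. q' \<in> \<Omega> \<and> (u q = 0 \<longleftrightarrow> u q' = 0)"
      using loc unfolding Z_def by blast
    then show "\<exists>T. open T \<and> q \<in> T \<and> T \<subseteq> Z" using \<open>q \<in> Z\<close> unfolding Z_def by blast
  qed
  have oW: "open W" unfolding open_subopen[of W]
  proof
    fix q assume "q \<in> W"
    then obtain N where "open N" "q \<in> N" "\<forall>q'\<in>N. q' \<in> \<Omega> \<and> (u q = 0 \<longleftrightarrow> u q' = 0)"
      using loc unfolding W_def by blast
    then show "\<exists>T. open T \<and> q \<in> T \<and> T \<subseteq> W" using \<open>q \<in> W\<close> unfolding W_def by blast
  qed
  have "(\<forall>p\<in>closure \<Omega>. u p = 0) \<or> (\<forall>p\<in>\<Omega>. u p < 0)" if cv: "convex \<Omega>"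
  proof -
    have "Z \<inter> \<Omega> = {} \<or> W \<inter> \<Omega> = {}"
      by (rule connectedD[OF convex_connected[OF cv] oZ oW]) (auto simp: Z_def W_def)
    then show ?thesis
    proof
      assume "Z \<inter> \<Omega> = {}"
      then have "\<forall>p\<in>\<Omega>. u p \<noteq> 0" unfolding Z_def by blast
      then show ?thesis using P1 closure_subset
        by (metis less_eq_real_def subsetD)
    next
      assume "W \<inter> \<Omega> = {}"
      then have "\<forall>p\<in>\<Omega>. u p = 0" unfolding W_def by blast
      then show ?thesis using assms(5) closure_Un_frontier by blast
    qed
  qed
  then show ?thesis using P1 by blast
qed

end
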